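(* For any integers $k,s\geq 2$ and any reals $K,\varepsilon>0$ there exists a constant $C=C(k,s,K,\varepsilon)>0$ such that the following holds. Let $G$ be a graph on $n$ vertices which contains no copy of $K_{s,s}$ as a subgraph, and let $V(G)=A\cup B$ be a partition with at least $e(A,B)\geq Cn^{1+1/k}$ crossing edges. Assume that the graph $G_1$ on $V(G)$ whose edges are the crossing edges (the edges of $G$ between $A$ and $B$) is $K$-almost-regular. Then at least a $(1-\varepsilon)$-fraction of the alternating paths of length $k$ in $G$ are induced subgraphs of $G$.
   Context: A graph is $K$-almost-regular if its maximum degree is at most $K$ times its minimum degree. An alternating path of length $k$ is a path in $G$ with $k$ edges (on $k+1$ distinct vertices) all of whose edges have one endpoint in $A$ and the other in $B$. Such a path is induced if $G$ has no edges between its vertices other than the path edges. *)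

theory Defs
  imports Complex_Main
begin

definition simple_graph :: "nat set \<Rightarrow> (nat \<Rightarrow> nat \<Rightarrow> bool) \<Rightarrow> bool" where
  "simple_graph V E \<longleftrightarrow> finite V \<and> (\<forall>u v. E u v \<longrightarrow> u \<in> V \<and> v \<in> V)
     \<and> (\<forall>u v. E u v \<longrightarrow> E v u) \<and> (\<forall>u. \<not> E u u)"

definition contains_Kss :: "nat set \<Rightarrow> (nat \<Rightarrow> nat \<Rightarrow> bool) \<Rightarrow> nat \<Rightarrow> bool" where
  "contains_Kss V E s \<longleftrightarrow> (\<exists>S T. S \<subseteq> V \<and> T \<subseteq> V \<and> S \<inter> T = {} \<and>
       card S = s \<and> card T = s \<and> (\<forall>x\<in>S. \<forall>y\<in>T. E x y))"

definition crossing :: "nat set \<Rightarrow> nat set \<Rightarrow> (nat \<Rightarrow> nat \<Rightarrow> bool) \<Rightarrow> nat \<Rightarrow> nat \<Rightarrow> bool" where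
  "crossing A B E u v \<longleftrightarrow> E u v \<and> ((u \<in> A \<and> v \<in> B) \<or> (u \<in> B \<and> v \<in> A))"

text \<open>e(A,B): number of edges with one endpoint in A and one in B
  (for disjoint A, B each such edge is counted once, as the pair (a,b)).\<close>
definition cross_edges :: "nat set \<Rightarrow> nat set \<Rightarrow> (nat \<Rightarrow> nat \<Rightarrow> bool) \<Rightarrow> nat" where
  "cross_edges A B E = card {(a, b). a \<in> A \<and> b \<in> B \<and> E a b}"

definition cross_deg :: "nat set \<Rightarrow> nat set \<Rightarrow> nat set \<Rightarrow> (nat \<Rightarrow> nat \<Rightarrow> bool) \<Rightarrow> nat \<Rightarrow> nat" where
  "cross_deg V A B E v = card {u \<in> V. crossing A B E v u}"

definition almost_regular :: "real \<Rightarrow> nat set \<Rightarrow> (nat \<Rightarrow> nat) \<Rightarrow> bool" where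
  "almost_regular K V d \<longleftrightarrow> real (Max (d ` V)) \<le> K * real (Min (d ` V))"

definition alt_paths :: "nat set \<Rightarrow> nat set \<Rightarrow> nat set \<Rightarrow> (nat \<Rightarrow> nat \<Rightarrow> bool) \<Rightarrow> nat \<Rightarrow> nat list set" where
  "alt_paths V A B E k = {p. length p = k + 1 \<and> distinct p \<and> set p \<subseteq> V \<and>
       (\<forall>i < k. crossing A B E (p ! i) (p ! Suc i))}"

definition induced_path :: "(nat \<Rightarrow> nat \<Rightarrow> bool) \<Rightarrow> nat list \<Rightarrow> bool" where
  "induced_path E p \<longleftrightarrow> (\<forall>i < length p. \<forall>j < length p. E (p ! i) (p ! j) \<longrightarrow> i = Suc j \<or> j = Suc i)"

end

theory Submission
  imports Defs
begin


lemma card_fibers: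
  assumes "finite T" "finite S" "f ` T \<subseteq> S"
  shows "card T = (\<Sum>s\<in>S. card {t\<in>T. f t = s})"
  using sum.group[OF assms(1,2,3), of "\<lambda>_. 1::nat"] by simp

lemma choose_le_pow: "(n::nat) choose r \<le> n ^ r"
  by (cases "r \<le> n") (auto simp: binomial_le_pow binomial_eq_0)

lemma kst:
  fixes X Y V :: "nat set" and E and s :: nat and \<eta> D :: real
  assumes fX: "finite X" and fY: "finite Y" and XV: "X \<subseteq> V" and YV: "Y \<subseteq> V"
    and irr: "\<forall>u. \<not> E u u" and nK: "\<not> contains_Kss V E s" and s1: "s \<ge> 1" and eta: "\<eta> > 0"
    and cX: "real (card X) \<le> D" and cY: "real (card Y) \<le> D"
    and DD: "D \<ge> 2 * s / \<eta> + s * 2^(s+1) * s^s / \<eta>^(s+1)"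
  shows "real (card {(x,y). x\<in>X \<and> y\<in>Y \<and> E x y}) \<le> \<eta> * D^2"
proof (rule ccontr)
  assume "\<not> ?thesis"
  hence big: "real (card {(x,y). x\<in>X \<and> y\<in>Y \<and> E x y}) > \<eta> * D^2" by simp
  define N where "N x = {y\<in>Y. E x y}" for x
  have finN: "finite (N x)" for x using fY unfolding N_def by simp
  have NY: "N x \<subseteq> Y" for x unfolding N_def by auto
  have cN: "real (card (N x)) \<le> D" for x using card_mono[OF fY NY[of x]] cY by linarith
  have sig: "{(x,y). x\<in>X \<and> y\<in>Y \<and> E x y} = Sigma X N" unfolding N_def by auto
  have esum: "card {(x,y). x\<in>X \<and> y\<in>Y \<and> E x y} = (\<Sum>x\<in>X. card (N x))"
    unfolding sig using fX finN by simp
  have D1: "2 * s / \<eta> \<le> D"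
  proof -
    have "0 \<le> s * 2^(s+1) * s^s / \<eta>^(s+1)" using eta by simp
    thus ?thesis using DD by linarith
  qed
  have s_le: "real s \<le> \<eta> * D / 2" using D1 eta by (simp add: field_simps)
  have Dpos: "D > 0"
  proof -
    have "2 * s / \<eta> > 0" using s1 eta by simp
    thus ?thesis using D1 by linarith
  qed
  define H where "H = {x\<in>X. real (card (N x)) \<ge> \<eta> * D / 2}"
  have fH: "finite H" using fX unfolding H_def by simp
  have HX: "H \<subseteq> X" unfolding H_def by auto
  have split: "(\<Sum>x\<in>X. real (card (N x))) = (\<Sum>x\<in>H. real (card (N x))) + (\<Sum>x\<in>X-H. real (card (N x)))"
    using sum.subset_diff[OF HX fX, of "\<lambda>x. real (card (N x))"] by linarith
  have light: "(\<Sum>x\<in>X-H. real (card (N x))) \<le> real (card (X - H)) * (\<eta> * D / 2)"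
    using sum_bounded_above[of "X-H" "\<lambda>x. real (card (N x))" "\<eta> * D / 2"] unfolding H_def by force
  have cXH: "real (card (X - H)) \<le> D" using card_mono[OF fX, of "X-H"] cX by force
  have light2: "(\<Sum>x\<in>X-H. real (card (N x))) \<le> D * (\<eta> * D / 2)"
  proof -
    have "real (card (X - H)) * (\<eta> * D / 2) \<le> D * (\<eta> * D / 2)"
      using mult_right_mono[OF cXH, of "\<eta> * D / 2"] eta Dpos by simp
    thus ?thesis using light by linarith
  qed
  have heavy: "(\<Sum>x\<in>H. real (card (N x))) \<le> real (card H) * D"
    using sum_bounded_above[of H "\<lambda>x. real (card (N x))" D] cN by force
  have "real (card {(x,y). x\<in>X \<and> y\<in>Y \<and> E x y}) = (\<Sum>x\<in>X. real (card (N x)))"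
    using esum by simp
  hence "\<eta> * D^2 < real (card H) * D + D * (\<eta> * D / 2)" using big split light2 heavy by linarith
  hence "D * (\<eta> * D / 2) < D * real (card H)" by (simp add: power2_eq_square algebra_simps)
  hence cH: "\<eta> * D / 2 < real (card H)" using Dpos by simp
  define a where "a = \<eta> * D / (2 * s)"
  have a_ge: "a ^ s \<le> real (card (N x) choose s)" if "x \<in> H" for x
  proof -
    have c1: "\<eta> * D / 2 \<le> real (card (N x))" using that unfolding H_def by simp
    have "real s \<le> real (card (N x))" using c1 s_le by linarith
    hence sl: "s \<le> card (N x)" by simp
    have "a = (\<eta> * D / 2) / real s" unfolding a_def by simp
    moreover have "(\<eta> * D / 2) / real s \<le> real (card (N x)) / real s"
      using c1 s1 by (intro divide_right_mono) auto
    ultimately have "a \<le> real (card (N x)) / real s" by simp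
    moreover have "0 \<le> a" unfolding a_def using eta Dpos by simp
    ultimately have "a ^ s \<le> (real (card (N x)) / real s) ^ s" by (simp add: power_mono)
    also have "\<dots> \<le> real (card (N x) choose s)" using binomial_ge_n_over_k_pow_k[OF sl] by simp
    finally show ?thesis .
  qed
  have low: "real (card H) * a ^ s \<le> (\<Sum>x\<in>H. real (card (N x) choose s))"
    using sum_bounded_below[of H "a^s" "\<lambda>x. real (card (N x) choose s)"] a_ge by simp
  define Ps where "Ps = {T. T \<subseteq> Y \<and> card T = s}"
  have fPs: "finite Ps" unfolding Ps_def using fY by simp
  have cPs: "card Ps = card Y choose s" unfolding Ps_def using n_subsets[OF fY] by simp
  have eqN: "card (N x) choose s = card {T\<in>Ps. T \<subseteq> N x}" for x
  proof -
    have "{T\<in>Ps. T \<subseteq> N x} = {T. T \<subseteq> N x \<and> card T = s}" unfolding Ps_def using NY by blast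
    thus ?thesis using n_subsets[OF finN[of x]] by simp
  qed
  have swap: "(\<Sum>x\<in>H. card {T\<in>Ps. T \<subseteq> N x}) = (\<Sum>T\<in>Ps. card {x\<in>H. T \<subseteq> N x})"
  proof -
    have "(\<Sum>x\<in>H. card {T\<in>Ps. T \<subseteq> N x}) = (\<Sum>x\<in>H. \<Sum>T\<in>Ps. if T \<subseteq> N x then 1 else 0)"
      using fPs by (simp add: sum.If_cases Int_def conj_commute)
    also have "\<dots> = (\<Sum>T\<in>Ps. \<Sum>x\<in>H. if T \<subseteq> N x then 1 else 0)" by (rule sum.swap)
    also have "\<dots> = (\<Sum>T\<in>Ps. card {x\<in>H. T \<subseteq> N x})"
      using fH by (simp add: sum.If_cases Int_def conj_commute)
    finally show ?thesis .
  qed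
  have fib: "card {x\<in>H. T \<subseteq> N x} \<le> s - 1" if "T \<in> Ps" for T
  proof (rule ccontr)
    assume "\<not> ?thesis"
    hence "s \<le> card {x\<in>H. T \<subseteq> N x}" by simp
    then obtain S where S: "S \<subseteq> {x\<in>H. T \<subseteq> N x}" "card S = s"
      by (meson obtain_subset_with_card_n)
    have "contains_Kss V E s"
      unfolding contains_Kss_def
    proof (intro exI conjI)
      show "S \<subseteq> V" using S HX XV by auto
      show "T \<subseteq> V" using that YV unfolding Ps_def by auto
      show "S \<inter> T = {}" using S irr unfolding N_def by blast
      show "card S = s" by fact
      show "card T = s" using that unfolding Ps_def by simp
      show "\<forall>x\<in>S. \<forall>y\<in>T. E x y" using S unfolding N_def by blast
    qed
    thus False using nK by simp
  qed
  have "(\<Sum>T\<in>Ps. card {x\<in>H. T \<subseteq> N x}) \<le> card Ps * (s - 1)"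
    using sum_bounded_above[of Ps "\<lambda>T. card {x\<in>H. T \<subseteq> N x}" "s-1"] fib by simp
  also have "\<dots> \<le> card Y ^ s * (s - 1)"
    unfolding cPs by (simp add: choose_le_pow)
  finally have up0: "(\<Sum>x\<in>H. card (N x) choose s) \<le> card Y ^ s * (s - 1)"
    using swap eqN by simp
  have "real (card Y) ^ s \<le> D ^ s" using cY by (simp add: power_mono)
  hence up: "(\<Sum>x\<in>H. real (card (N x) choose s)) \<le> D ^ s * (real s - 1)"
  proof -
    have "(\<Sum>x\<in>H. real (card (N x) choose s)) \<le> real (card Y) ^ s * real (s - 1)"
      using up0 by (metis of_nat_le_iff of_nat_mult of_nat_power of_nat_sum)
    also have "\<dots> \<le> D ^ s * real (s-1)"
      using \<open>real (card Y) ^ s \<le> D ^ s\<close> by (simp add: mult_right_mono)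
    finally show ?thesis using s1 by (simp add: of_nat_diff)
  qed
  have apos: "a \<ge> 0" unfolding a_def using eta Dpos by simp
  have "(\<eta> * D / 2) * a ^ s < real (card H) * a ^ s"
  proof -
    have "a > 0" unfolding a_def using eta Dpos s1 by simp
    thus ?thesis using cH by simp
  qed
  hence A1: "(\<eta> * D / 2) * a ^ s < D ^ s * (real s - 1)" using low up by linarith
  define b where "b = \<eta>^(s+1) * D / (2^(s+1) * s^s)"
  have eqb: "(\<eta> * D / 2) * a ^ s = D ^ s * b"
    unfolding a_def b_def by (simp add: power_divide power_mult_distrib field_simps)
  have bs: "b \<ge> s"
  proof -
    have "0 \<le> 2 * s / \<eta>" using eta by simp
    hence "s * 2^(s+1) * s^s / \<eta>^(s+1) \<le> D" using DD by linarith
    thus ?thesis unfolding b_def using eta s1 by (simp add: field_simps)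
  qed
  have "D ^ s * s \<le> D ^ s * b" using bs Dpos by (simp add: mult_left_mono)
  hence "(\<eta> * D / 2) * a ^ s \<ge> D ^ s * s" using eqb by simp
  thus False using A1 Dpos by (smt (verit) mult_left_mono zero_le_power)
qed



definition walks :: "nat set \<Rightarrow> (nat \<Rightarrow> nat \<Rightarrow> bool) \<Rightarrow> nat \<Rightarrow> nat list set" where
  "walks V R m = {p. length p = m \<and> set p \<subseteq> V \<and> successively R p}"

definition Qset :: "nat set \<Rightarrow> (nat \<Rightarrow> nat \<Rightarrow> bool) \<Rightarrow> (nat \<Rightarrow> nat \<Rightarrow> bool) \<Rightarrow> nat \<Rightarrow> nat \<Rightarrow> nat \<Rightarrow> nat list set" where
  "Qset V R E m i j = {p \<in> walks V R m. E (p!i) (p!j)}"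

lemma walks_finite: "finite V \<Longrightarrow> finite (walks V R m)"
proof -
  assume "finite V"
  hence "finite {xs. set xs \<subseteq> V \<and> length xs = m}" by (rule finite_lists_length_eq)
  moreover have "walks V R m \<subseteq> {xs. set xs \<subseteq> V \<and> length xs = m}" unfolding walks_def by auto
  ultimately show ?thesis by (rule finite_subset[rotated])
qed

lemma card_fibers_le:
  assumes "finite T" "finite S" "f ` T \<subseteq> S" "\<And>s. s \<in> S \<Longrightarrow> real (card {t\<in>T. f t = s}) \<le> D"
  shows "real (card T) \<le> real (card S) * D"
proof -
  have "real (card T) = (\<Sum>s\<in>S. real (card {t\<in>T. f t = s}))"
    using card_fibers[OF assms(1-3)] by simp
  also have "\<dots> \<le> real (card S) * D" using sum_bounded_above[of S _ D] assms(4) by force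
  finally show ?thesis .
qed

lemma card_fibers_ge:
  assumes "finite T" "finite S" "f ` T \<subseteq> S" "\<And>s. s \<in> S \<Longrightarrow> real (card {t\<in>T. f t = s}) \<ge> D"
  shows "real (card T) \<ge> real (card S) * D"
proof -
  have "real (card T) = (\<Sum>s\<in>S. real (card {t\<in>T. f t = s}))"
    using card_fibers[OF assms(1-3)] by simp
  moreover have "real (card S) * D \<le> (\<Sum>s\<in>S. real (card {t\<in>T. f t = s}))"
    using sum_bounded_below[of S D] assms(4) by force
  ultimately show ?thesis by simp
qed

lemma snoc_walks:
  assumes "q \<noteq> []"
  shows "q @ [x] \<in> walks V R (Suc m) \<longleftrightarrow> q \<in> walks V R m \<and> x \<in> V \<and> R (last q) x"
  using assms unfolding walks_def by (auto simp: successively_append_iff)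

lemma cons_walks:
  assumes "q \<noteq> []"
  shows "x # q \<in> walks V R (Suc m) \<longleftrightarrow> q \<in> walks V R m \<and> x \<in> V \<and> R x (hd q)"
  using assms unfolding walks_def by (auto simp: successively_Cons)

lemma butlast_walks:
  assumes "p \<in> walks V R (Suc m)" "m > 0"
  shows "butlast p \<in> walks V R m \<and> p = butlast p @ [last p] \<and> last p \<in> V \<and> R (last (butlast p)) (last p)"
proof -
  have lp: "length p = Suc m" using assms unfolding walks_def by simp
  hence ne: "p \<noteq> []" by auto
  have "length (butlast p) = m" using lp by simp
  hence bne: "butlast p \<noteq> []" using assms(2) by (metis list.size(3) less_irrefl)
  have eq: "p = butlast p @ [last p]" using ne by simp
  have "butlast p @ [last p] \<in> walks V R (Suc m)" using assms(1) eq by simp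
  thus ?thesis using snoc_walks[OF bne] eq by blast
qed

lemma tl_walks:
  assumes "p \<in> walks V R (Suc m)" "m > 0"
  shows "tl p \<in> walks V R m \<and> p = hd p # tl p \<and> hd p \<in> V \<and> R (hd p) (hd (tl p))"
proof -
  have lp: "length p = Suc m" using assms unfolding walks_def by simp
  hence ne: "p \<noteq> []" by auto
  have "length (tl p) = m" using lp by simp
  hence bne: "tl p \<noteq> []" using assms(2) by (metis list.size(3) less_irrefl)
  have eq: "p = hd p # tl p" using ne by simp
  have "hd p # tl p \<in> walks V R (Suc m)" using assms(1) eq by simp
  thus ?thesis using cons_walks[OF bne] eq by blast
qed

lemma walks_ub:
  assumes fV: "finite V" and deg: "\<And>v. v \<in> V \<Longrightarrow> card {u\<in>V. R v u} \<le> \<Delta>"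
  shows "real (card (walks V R (Suc m))) \<le> real (card V) * real \<Delta> ^ m"
proof (induction m)
  case 0
  have "walks V R (Suc 0) = (\<lambda>x. [x]) ` V" unfolding walks_def
    by (auto simp: length_Suc_conv)
  hence "card (walks V R (Suc 0)) = card V" by (simp add: card_image inj_on_def)
  thus ?case by simp
next
  case (Suc m)
  have "real (card (walks V R (Suc (Suc m)))) \<le> real (card (walks V R (Suc m))) * real \<Delta>"
  proof (rule card_fibers_le[where f = butlast])
    show "finite (walks V R (Suc (Suc m)))" "finite (walks V R (Suc m))" using walks_finite fV by auto
    show "butlast ` walks V R (Suc (Suc m)) \<subseteq> walks V R (Suc m)" using butlast_walks by blast
    fix q assume q: "q \<in> walks V R (Suc m)"
    have qne: "q \<noteq> []" using q unfolding walks_def by auto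
    have "last q \<in> V" using q qne unfolding walks_def by auto
    have "{t \<in> walks V R (Suc (Suc m)). butlast t = q} \<subseteq> (\<lambda>x. q @ [x]) ` {u\<in>V. R (last q) u}"
    proof
      fix t assume "t \<in> {t \<in> walks V R (Suc (Suc m)). butlast t = q}"
      hence t: "t \<in> walks V R (Suc (Suc m))" "butlast t = q" by auto
      from butlast_walks[OF t(1)] t(2) show "t \<in> (\<lambda>x. q @ [x]) ` {u\<in>V. R (last q) u}" by auto
    qed
    hence "card {t \<in> walks V R (Suc (Suc m)). butlast t = q} \<le> card ((\<lambda>x. q @ [x]) ` {u\<in>V. R (last q) u})"
      using fV by (intro card_mono) auto
    also have "\<dots> \<le> card {u\<in>V. R (last q) u}" by (rule card_image_le) (use fV in auto)
    also have "\<dots> \<le> \<Delta>" using deg \<open>last q \<in> V\<close> by blast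
    finally show "real (card {t \<in> walks V R (Suc (Suc m)). butlast t = q}) \<le> real \<Delta>" by simp
  qed
  also have "\<dots> \<le> real (card V) * real \<Delta> ^ m * real \<Delta>" using Suc by (simp add: mult_right_mono)
  finally show ?case by (simp add: algebra_simps)
qed



lemma Q_ub:
  assumes fV: "finite V" and deg: "\<And>v. v \<in> V \<Longrightarrow> card {u\<in>V. R v u} \<le> \<Delta>"
    and symR: "\<And>x y. R x y \<Longrightarrow> R y x"
    and pairs: "\<And>X Y. X \<subseteq> V \<Longrightarrow> Y \<subseteq> V \<Longrightarrow> card X \<le> \<Delta> \<Longrightarrow> card Y \<le> \<Delta> \<Longrightarrow>
         real (card {(x,y). x\<in>X \<and> y\<in>Y \<and> E x y}) \<le> Pb"
  shows "i + 2 \<le> j \<Longrightarrow> j < m \<Longrightarrow> real (card (Qset V R E m i j)) \<le> real (card V) * real \<Delta> ^ (m - 3) * Pb"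
proof (induction m arbitrary: i j rule: less_induct)
  case (less m)
  have fQ: "finite (Qset V R E m' i' j')" for m' i' j'
    using walks_finite[OF fV] unfolding Qset_def by simp
  have D0: "0 \<le> real \<Delta>" by simp
  have Pb0: "0 \<le> Pb" using pairs[of "{}" "{}"] by simp
  obtain m1 where m1: "m = Suc m1" and m1p: "m1 > 0" using less.prems by (cases m) auto
  show ?case
  proof (cases "Suc j < m")
    case True
    have IH: "real (card (Qset V R E m1 i j)) \<le> real (card V) * real \<Delta> ^ (m1 - 3) * Pb"
      using less.IH[of m1 i j] less.prems True m1 by simp
    have "real (card (Qset V R E m i j)) \<le> real (card (Qset V R E m1 i j)) * real \<Delta>"
    proof (rule card_fibers_le[where f = butlast])
      show "finite (Qset V R E m i j)" "finite (Qset V R E m1 i j)" by (rule fQ)+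
      show "butlast ` Qset V R E m i j \<subseteq> Qset V R E m1 i j"
      proof
        fix q assume "q \<in> butlast ` Qset V R E m i j"
        then obtain p where p: "p \<in> Qset V R E m i j" "q = butlast p" by auto
        have pw: "p \<in> walks V R (Suc m1)" and pE: "E (p!i) (p!j)" using p m1 unfolding Qset_def by auto
        have lp: "length p = m" using pw m1 unfolding walks_def by simp
        have "butlast p ! i = p ! i" "butlast p ! j = p ! j" using lp True less.prems
          by (auto simp: nth_butlast)
        thus "q \<in> Qset V R E m1 i j" using butlast_walks[OF pw m1p] pE p(2) unfolding Qset_def by simp
      qed
      fix q assume q: "q \<in> Qset V R E m1 i j"
      have qw: "q \<in> walks V R m1" using q unfolding Qset_def by simp
      have qne: "q \<noteq> []" using qw m1p unfolding walks_def by auto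
      have "last q \<in> V" using qw qne unfolding walks_def by auto
      have "{t \<in> Qset V R E m i j. butlast t = q} \<subseteq> (\<lambda>x. q @ [x]) ` {u\<in>V. R (last q) u}"
      proof
        fix t assume "t \<in> {t \<in> Qset V R E m i j. butlast t = q}"
        hence t: "t \<in> walks V R (Suc m1)" "butlast t = q" using m1 unfolding Qset_def by auto
        from butlast_walks[OF t(1) m1p] t(2) show "t \<in> (\<lambda>x. q @ [x]) ` {u\<in>V. R (last q) u}" by auto
      qed
      hence "card {t \<in> Qset V R E m i j. butlast t = q} \<le> card ((\<lambda>x. q @ [x]) ` {u\<in>V. R (last q) u})"
        using fV by (intro card_mono) auto
      also have "\<dots> \<le> card {u\<in>V. R (last q) u}" by (rule card_image_le) (use fV in auto)
      also have "\<dots> \<le> \<Delta>" using deg \<open>last q \<in> V\<close> by blast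
      finally show "real (card {t \<in> Qset V R E m i j. butlast t = q}) \<le> real \<Delta>" by simp
    qed
    also have "\<dots> \<le> real (card V) * real \<Delta> ^ (m1 - 3) * Pb * real \<Delta>"
      using IH D0 by (rule mult_right_mono)
    also have "\<dots> = real (card V) * real \<Delta> ^ (m - 3) * Pb"
    proof -
      have "m - 3 = Suc (m1 - 3)" using m1 True less.prems by simp
      thus ?thesis by (simp add: algebra_simps)
    qed
    finally show ?thesis .
  next
    case False
    hence jm: "j = m1" using less.prems m1 by simp
    show ?thesis
    proof (cases i)
      case (Suc i1)
      have IH: "real (card (Qset V R E m1 i1 (j - 1))) \<le> real (card V) * real \<Delta> ^ (m1 - 3) * Pb"
        using less.IH[of m1 i1 "j-1"] less.prems Suc jm m1 by simp
      have "real (card (Qset V R E m i j)) \<le> real (card (Qset V R E m1 i1 (j-1))) * real \<Delta>"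
      proof (rule card_fibers_le[where f = tl])
        show "finite (Qset V R E m i j)" "finite (Qset V R E m1 i1 (j-1))" by (rule fQ)+
        show "tl ` Qset V R E m i j \<subseteq> Qset V R E m1 i1 (j-1)"
        proof
          fix q assume "q \<in> tl ` Qset V R E m i j"
          then obtain p where p: "p \<in> Qset V R E m i j" "q = tl p" by auto
          have pw: "p \<in> walks V R (Suc m1)" and pE: "E (p!i) (p!j)" using p m1 unfolding Qset_def by auto
          have lp: "length p = m" using pw m1 unfolding walks_def by simp
          have "tl p ! i1 = p ! i" "tl p ! (j-1) = p ! j" using lp Suc jm less.prems m1
            by (auto simp: nth_tl)
          thus "q \<in> Qset V R E m1 i1 (j-1)" using tl_walks[OF pw m1p] pE p(2) unfolding Qset_def by simp
        qed
        fix q assume q: "q \<in> Qset V R E m1 i1 (j-1)"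
        have qw: "q \<in> walks V R m1" using q unfolding Qset_def by simp
        have qne: "q \<noteq> []" using qw m1p unfolding walks_def by auto
        have "hd q \<in> V" using qw qne unfolding walks_def by auto
        have "{t \<in> Qset V R E m i j. tl t = q} \<subseteq> (\<lambda>x. x # q) ` {u\<in>V. R (hd q) u}"
        proof
          fix t assume "t \<in> {t \<in> Qset V R E m i j. tl t = q}"
          hence t: "t \<in> walks V R (Suc m1)" "tl t = q" using m1 unfolding Qset_def by auto
          from tl_walks[OF t(1) m1p] t(2) symR show "t \<in> (\<lambda>x. x # q) ` {u\<in>V. R (hd q) u}" by auto
        qed
        hence "card {t \<in> Qset V R E m i j. tl t = q} \<le> card ((\<lambda>x. x # q) ` {u\<in>V. R (hd q) u})"
          using fV by (intro card_mono) auto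
        also have "\<dots> \<le> card {u\<in>V. R (hd q) u}" by (rule card_image_le) (use fV in auto)
        also have "\<dots> \<le> \<Delta>" using deg \<open>hd q \<in> V\<close> by blast
        finally show "real (card {t \<in> Qset V R E m i j. tl t = q}) \<le> real \<Delta>" by simp
      qed
      also have "\<dots> \<le> real (card V) * real \<Delta> ^ (m1 - 3) * Pb * real \<Delta>"
        using IH D0 by (rule mult_right_mono)
      also have "\<dots> = real (card V) * real \<Delta> ^ (m - 3) * Pb"
      proof -
        have "m - 3 = Suc (m1 - 3)" using m1 jm Suc less.prems by simp
        thus ?thesis by (simp add: algebra_simps)
      qed
      finally show ?thesis .
    next
      case 0
      obtain m2 where m2: "m1 = Suc m2" and m2p: "m2 > 0" using jm 0 less.prems by (cases m1) auto
      have "real (card (Qset V R E m i j)) \<le> real (card (walks V R m2)) * Pb"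
      proof (rule card_fibers_le[where f = "\<lambda>p. butlast (tl p)"])
        show "finite (Qset V R E m i j)" by (rule fQ)
        show "finite (walks V R m2)" using walks_finite fV by simp
        show "(\<lambda>p. butlast (tl p)) ` Qset V R E m i j \<subseteq> walks V R m2"
        proof
          fix q assume "q \<in> (\<lambda>p. butlast (tl p)) ` Qset V R E m i j"
          then obtain p where p: "p \<in> Qset V R E m i j" "q = butlast (tl p)" by auto
          have pw: "p \<in> walks V R (Suc m1)" using p m1 unfolding Qset_def by auto
          have "tl p \<in> walks V R (Suc m2)" using tl_walks[OF pw m1p] m2 by simp
          thus "q \<in> walks V R m2" using butlast_walks[OF _ m2p] p(2) by blast
        qed
        fix q assume qw: "q \<in> walks V R m2"
        have qne: "q \<noteq> []" using qw m2p unfolding walks_def by auto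
        define X where "X = {u\<in>V. R (hd q) u}"
        define Y where "Y = {u\<in>V. R (last q) u}"
        have "hd q \<in> V" "last q \<in> V" using qw qne unfolding walks_def by auto
        hence cX: "card X \<le> \<Delta>" and cY: "card Y \<le> \<Delta>" unfolding X_def Y_def using deg by auto
        have "finite (X \<times> Y)" unfolding X_def Y_def using fV by simp
        hence finP: "finite {(x,y). x\<in>X \<and> y\<in>Y \<and> E x y}" by (rule finite_subset[rotated]) auto
        have "{t \<in> Qset V R E m i j. butlast (tl t) = q} \<subseteq>
              (\<lambda>(x,y). x # q @ [y]) ` {(x,y). x\<in>X \<and> y\<in>Y \<and> E x y}"
        proof
          fix t assume "t \<in> {t \<in> Qset V R E m i j. butlast (tl t) = q}"
          hence tw: "t \<in> walks V R (Suc m1)" and tE: "E (t!i) (t!j)" and tq: "butlast (tl t) = q"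
            using m1 unfolding Qset_def by auto
          have A: "tl t \<in> walks V R (Suc m2)" "t = hd t # tl t" "hd t \<in> V" "R (hd t) (hd (tl t))"
            using tl_walks[OF tw m1p] m2 by auto
          have B: "tl t = q @ [last (tl t)]" "last (tl t) \<in> V" "R (last q) (last (tl t))"
            using butlast_walks[OF A(1) m2p] tq by auto
          have teq: "t = hd t # q @ [last (tl t)]" using A(2) B(1) by simp
          have lq: "length q = m2" using qw unfolding walks_def by simp
          have "hd (tl t) = hd q" using B(1) qne by (metis hd_append)
          hence x: "hd t \<in> X" using A(3,4) symR unfolding X_def by auto
          have y: "last (tl t) \<in> Y" using B unfolding Y_def by auto
          have "t ! i = hd t" using 0 teq by (metis nth_Cons_0)
          moreover have "t ! j = last (tl t)"
          proof -
            have "j = Suc (length q)" using jm m2 lq by simp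
            thus ?thesis using teq by (metis nth_Cons_Suc nth_append_length)
          qed
          ultimately have "E (hd t) (last (tl t))" using tE by simp
          thus "t \<in> (\<lambda>(x,y). x # q @ [y]) ` {(x,y). x\<in>X \<and> y\<in>Y \<and> E x y}"
            using x y teq by (auto intro!: image_eqI[where x = "(hd t, last (tl t))"])
        qed
        hence "card {t \<in> Qset V R E m i j. butlast (tl t) = q} \<le>
               card ((\<lambda>(x,y). x # q @ [y]) ` {(x,y). x\<in>X \<and> y\<in>Y \<and> E x y})"
          using finP by (intro card_mono) auto
        also have "\<dots> \<le> card {(x,y). x\<in>X \<and> y\<in>Y \<and> E x y}" by (rule card_image_le) (use finP in auto)
        finally have "real (card {t \<in> Qset V R E m i j. butlast (tl t) = q}) \<le> real (card {(x,y). x\<in>X \<and> y\<in>Y \<and> E x y})"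
          by simp
        also have "\<dots> \<le> Pb" using pairs[OF _ _ cX cY] unfolding X_def Y_def by auto
        finally show "real (card {t \<in> Qset V R E m i j. butlast (tl t) = q}) \<le> Pb" .
      qed
      also have "\<dots> \<le> real (card V) * real \<Delta> ^ (m2 - 1) * Pb"
      proof -
        have "real (card (walks V R (Suc (m2 - 1)))) \<le> real (card V) * real \<Delta> ^ (m2 - 1)"
          by (rule walks_ub[OF fV deg])
        hence "real (card (walks V R m2)) \<le> real (card V) * real \<Delta> ^ (m2 - 1)" using m2p by simp
        thus ?thesis using Pb0 by (rule mult_right_mono)
      qed
      also have "\<dots> = real (card V) * real \<Delta> ^ (m - 3) * Pb" using m1 m2 by simp
      finally show ?thesis .
    qed
  qed
qed



lemma successively_nth: "successively P xs \<longleftrightarrow> (\<forall>i. Suc i < length xs \<longrightarrow> P (xs!i) (xs!Suc i))"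
proof (induction xs)
  case Nil thus ?case by simp
next
  case (Cons x xs)
  show ?case
  proof (cases xs)
    case Nil thus ?thesis by simp
  next
    case (Cons y ys)
    have "(\<forall>i. Suc i < length (x # xs) \<longrightarrow> P ((x#xs)!i) ((x#xs)!Suc i)) \<longleftrightarrow>
          P x y \<and> (\<forall>i. Suc i < length xs \<longrightarrow> P (xs!i) (xs!Suc i))"
    proof
      assume H: "\<forall>i. Suc i < length (x # xs) \<longrightarrow> P ((x#xs)!i) ((x#xs)!Suc i)"
      have "P x y" using H[rule_format, of 0] Cons by simp
      moreover have "\<forall>i. Suc i < length xs \<longrightarrow> P (xs!i) (xs!Suc i)"
        using H by (metis Suc_less_eq length_Cons nth_Cons_Suc)
      ultimately show "P x y \<and> (\<forall>i. Suc i < length xs \<longrightarrow> P (xs!i) (xs!Suc i))" by simp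
    next
      assume H: "P x y \<and> (\<forall>i. Suc i < length xs \<longrightarrow> P (xs!i) (xs!Suc i))"
      show "\<forall>i. Suc i < length (x # xs) \<longrightarrow> P ((x#xs)!i) ((x#xs)!Suc i)"
      proof (intro allI impI)
        fix i assume "Suc i < length (x # xs)"
        thus "P ((x#xs)!i) ((x#xs)!Suc i)" using H Cons by (cases i) auto
      qed
    qed
    thus ?thesis using Cons.IH Cons by simp
  qed
qed

lemma dpaths_lb:
  assumes fV: "finite V" and mindeg: "\<And>v. v \<in> V \<Longrightarrow> \<delta> \<le> real (card {u\<in>V. R v u})"
    and dk: "real k \<le> \<delta>"
  shows "m \<le> k \<Longrightarrow> real (card {p\<in>walks V R (Suc m). distinct p}) \<ge> real (card V) * (\<delta> - k) ^ m"
proof (induction m)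
  case 0
  have "{p\<in>walks V R (Suc 0). distinct p} = (\<lambda>x. [x]) ` V" unfolding walks_def
    by (auto simp: length_Suc_conv)
  hence "card {p\<in>walks V R (Suc 0). distinct p} = card V" by (simp add: card_image inj_on_def)
  thus ?case by simp
next
  case (Suc m)
  let ?T = "{p\<in>walks V R (Suc (Suc m)). distinct p}"
  let ?S = "{p\<in>walks V R (Suc m). distinct p}"
  have IH: "real (card V) * (\<delta> - k) ^ m \<le> real (card ?S)" using Suc by simp
  have fT: "finite ?T" "finite ?S" using walks_finite[OF fV] by auto
  have "real (card ?T) \<ge> real (card ?S) * (\<delta> - k)"
  proof (rule card_fibers_ge[where f = butlast])
    show "finite ?T" "finite ?S" by (fact fT)+
    show "butlast ` ?T \<subseteq> ?S" using butlast_walks[of _ V R "Suc m"] by (auto simp: distinct_butlast)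
    fix q assume q: "q \<in> ?S"
    have qne: "q \<noteq> []" using q unfolding walks_def by auto
    have lq: "length q = Suc m" using q unfolding walks_def by simp
    have "last q \<in> V" using q qne unfolding walks_def by auto
    define N where "N = {u\<in>V. R (last q) u} - set q"
    have sub: "(\<lambda>x. q @ [x]) ` N \<subseteq> {t \<in> ?T. butlast t = q}"
      using q qne unfolding N_def by (auto simp: snoc_walks)
    have "card ((\<lambda>x. q @ [x]) ` N) = card N" by (simp add: card_image inj_on_def)
    moreover have "card ((\<lambda>x. q @ [x]) ` N) \<le> card {t \<in> ?T. butlast t = q}"
      by (rule card_mono[OF _ sub]) (use walks_finite[OF fV] in auto)
    ultimately have "card N \<le> card {t \<in> ?T. butlast t = q}" by simp
    moreover have "real (card N) \<ge> \<delta> - k"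
    proof -
      have "card {u\<in>V. R (last q) u} - card (set q) \<le> card N"
        unfolding N_def by (rule diff_card_le_card_Diff) simp
      moreover have "card (set q) \<le> Suc m" using card_length[of q] lq by simp
      ultimately have "real (card {u\<in>V. R (last q) u}) - real (Suc m) \<le> real (card N)" by linarith
      moreover have "real (Suc m) \<le> real k" using Suc.prems by simp
      ultimately show ?thesis using mindeg[OF \<open>last q \<in> V\<close>] by linarith
    qed
    ultimately show "real (card {t \<in> ?T. butlast t = q}) \<ge> \<delta> - k" by linarith
  qed
  moreover have "real (card V) * (\<delta> - k) ^ m * (\<delta> - k) \<le> real (card ?S) * (\<delta> - k)"
    using IH dk by (intro mult_right_mono) auto
  ultimately show ?case by (simp add: algebra_simps)
qed



theorem lemma4p7:
  fixes k s :: nat and K \<epsilon> :: real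
  assumes "k \<ge> 2" and "s \<ge> 2" and "K > 0" and "\<epsilon> > 0"
  shows "\<exists>C > 0. \<forall>(V :: nat set) (E :: nat \<Rightarrow> nat \<Rightarrow> bool) A B.
     simple_graph V E \<longrightarrow> \<not> contains_Kss V E s \<longrightarrow>
     A \<union> B = V \<longrightarrow> A \<inter> B = {} \<longrightarrow>
     real (cross_edges A B E) \<ge> C * real (card V) powr (1 + 1 / real k) \<longrightarrow>
     almost_regular K V (cross_deg V A B E) \<longrightarrow>
     real (card {p \<in> alt_paths V A B E k. induced_path E p})
       \<ge> (1 - \<epsilon>) * real (card (alt_paths V A B E k))"
proof -
  note k2 = assms(1) and s2 = assms(2) and Kp = assms(3) and ep = assms(4)
  define \<eta> where "\<eta> = \<epsilon> / ((k+1)^2 * (2*K)^k)"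
  have eta: "\<eta> > 0" unfolding \<eta>_def using ep Kp by simp
  define D0 where "D0 = 2 * s / \<eta> + s * 2^(s+1) * s^s / \<eta>^(s+1)"
  have D0p: "D0 \<ge> 0" unfolding D0_def using eta by simp
  define C where "C = D0 + 2 * k * K + 1"
  have kK0: "0 \<le> 2 * real k * K" using Kp by simp
  hence Cp: "C > 0" unfolding C_def using D0p by linarith
  show ?thesis
  proof (intro exI[of _ C] conjI allI impI)
    show "C > 0" by fact
    fix V :: "nat set" and E :: "nat \<Rightarrow> nat \<Rightarrow> bool" and A B
    assume sg: "simple_graph V E" and nK: "\<not> contains_Kss V E s" and AB: "A \<union> B = V"
      and disj: "A \<inter> B = {}"
      and ce: "real (cross_edges A B E) \<ge> C * real (card V) powr (1 + 1 / real k)"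
      and ar: "almost_regular K V (cross_deg V A B E)"
    define R where "R = crossing A B E"
    have fV: "finite V" and symE: "\<And>u v. E u v \<Longrightarrow> E v u" and irr: "\<forall>u. \<not> E u u"
      using sg unfolding simple_graph_def by auto
    have symR: "\<And>x y. R x y \<Longrightarrow> R y x" unfolding R_def crossing_def using symE by blast
    have alt_eq: "alt_paths V A B E k = {p \<in> walks V R (Suc k). distinct p}"
      unfolding alt_paths_def walks_def R_def by (auto simp: successively_nth)
    show "real (card {p \<in> alt_paths V A B E k. induced_path E p})
       \<ge> (1 - \<epsilon>) * real (card (alt_paths V A B E k))"
    proof (cases "V = {}")
      case True
      have "alt_paths V A B E k = {}" unfolding alt_paths_def True by auto
      thus ?thesis by simp
    next
      case False
      have n1: "card V \<ge> 1" using False fV by (simp add: Suc_leI card_gt_0_iff)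
      define d where "d v = card {u\<in>V. R v u}" for v
      have cd: "cross_deg V A B E = d" unfolding cross_deg_def d_def R_def by (rule ext) simp
      define \<Delta> where "\<Delta> = Max (d ` V)"
      define \<delta> where "\<delta> = Min (d ` V)"
      have dle: "d v \<le> \<Delta>" if "v \<in> V" for v unfolding \<Delta>_def using fV that by simp
      have dge: "\<delta> \<le> d v" if "v \<in> V" for v unfolding \<delta>_def using fV that by simp
      have ar': "real \<Delta> \<le> K * real \<delta>" using ar unfolding almost_regular_def cd \<Delta>_def \<delta>_def .
      have "{(a,b). a\<in>A \<and> b\<in>B \<and> E a b} \<subseteq> Sigma A (\<lambda>a. {u\<in>V. R a u})"
        unfolding R_def crossing_def using AB by auto
      moreover have fA: "finite A" using fV AB by auto
      ultimately have "cross_edges A B E \<le> card (Sigma A (\<lambda>a. {u\<in>V. R a u}))"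
        unfolding cross_edges_def using fV by (intro card_mono) auto
      also have "\<dots> = (\<Sum>a\<in>A. d a)" unfolding d_def using fA fV by simp
      also have "\<dots> \<le> card A * \<Delta>" using sum_bounded_above[of A d \<Delta>] dle AB by auto
      also have "\<dots> \<le> card V * \<Delta>" using card_mono[OF fV, of A] AB by auto
      finally have ceub: "real (cross_edges A B E) \<le> real (card V) * real \<Delta>" by (simp flip: of_nat_mult)
      have "real (card V) powr (1 + 1 / real k) \<ge> real (card V) powr 1"
        using n1 by (intro powr_mono) auto
      hence "real (card V) powr (1 + 1 / real k) \<ge> real (card V)" using n1 by simp
      hence "C * real (card V) \<le> C * real (card V) powr (1 + 1 / real k)" using Cp by simp
      hence "C * real (card V) \<le> real (card V) * real \<Delta>" using ce ceub by linarith
      hence DC: "C \<le> real \<Delta>" using n1 by (simp add: mult.commute)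
      have DD0: "D0 \<le> real \<Delta>" using DC kK0 unfolding C_def by linarith
      have D2k: "2 * k * K \<le> real \<Delta>" using DC D0p unfolding C_def by linarith
      have dK: "real \<Delta> / K \<le> real \<delta>" using ar' Kp by (simp add: divide_le_eq mult.commute)
      have dk: "real \<delta> - k \<ge> real \<Delta> / (2 * K)"
      proof -
        have "real k \<le> real \<Delta> / (2 * K)" using D2k Kp by (simp add: le_divide_eq algebra_simps)
        moreover have "real \<Delta> / K = real \<Delta> / (2 * K) + real \<Delta> / (2 * K)" by (simp add: field_simps)
        ultimately show ?thesis using dK by linarith
      qed
      have dk0: "real k \<le> real \<delta>" using dk Kp by (smt (verit) divide_nonneg_pos of_nat_0_le_iff)
      have pairs: "real (card {(x,y). x\<in>X \<and> y\<in>Y \<and> E x y}) \<le> \<eta> * real \<Delta> ^ 2"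
        if "X \<subseteq> V" "Y \<subseteq> V" "card X \<le> \<Delta>" "card Y \<le> \<Delta>" for X Y
        using kst[of X Y V E s \<eta> "real \<Delta>"] that fV nK irr s2 eta DD0 unfolding D0_def
        by (auto intro: finite_subset)
      have deg': "\<And>v. v \<in> V \<Longrightarrow> card {u\<in>V. R v u} \<le> \<Delta>" using dle unfolding d_def by auto
      have Qb: "real (card (Qset V R E (Suc k) i j)) \<le> \<eta> * real (card V) * real \<Delta> ^ k"
        if "i + 2 \<le> j" "j < Suc k" for i j
      proof -
        have "real (card (Qset V R E (Suc k) i j)) \<le> real (card V) * real \<Delta> ^ (Suc k - 3) * (\<eta> * real \<Delta> ^ 2)"
          using Q_ub[where V=V and R=R and E=E and \<Delta>=\<Delta> and Pb="\<eta> * real \<Delta> ^ 2", OF fV deg' symR pairs] that by blast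
        also have "\<dots> = \<eta> * real (card V) * real \<Delta> ^ k"
        proof -
          have "k = (Suc k - 3) + 2" using k2 by simp
          hence "real \<Delta> ^ k = real \<Delta> ^ (Suc k - 3) * real \<Delta> ^ 2" by (metis power_add)
          thus ?thesis by simp
        qed
        finally show ?thesis .
      qed
      define P where "P = {(i,j). i + 2 \<le> j \<and> j \<le> k}"
      have PS: "P \<subseteq> {0..k} \<times> {0..k}" unfolding P_def by auto
      hence fP: "finite P" by (rule finite_subset) simp
      have cP: "card P \<le> (k+1)^2"
        using card_mono[OF _ PS] by (simp add: power2_eq_square)
      define AP where "AP = alt_paths V A B E k"
      define NI where "NI = {p \<in> AP. \<not> induced_path E p}"
      have NIsub: "NI \<subseteq> (\<Union>ij\<in>P. Qset V R E (Suc k) (fst ij) (snd ij))"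
      proof
        fix p assume "p \<in> NI"
        hence pA: "p \<in> AP" and ni: "\<not> induced_path E p" unfolding NI_def by auto
        have pw: "p \<in> walks V R (Suc k)" and lp: "length p = Suc k" using pA alt_eq unfolding AP_def walks_def by auto
        obtain i j where ij: "i < Suc k" "j < Suc k" "E (p!i) (p!j)" "\<not> (i = Suc j \<or> j = Suc i)"
          using ni lp unfolding induced_path_def by auto
        have "i \<noteq> j" using ij(3) irr by auto
        show "p \<in> (\<Union>ij\<in>P. Qset V R E (Suc k) (fst ij) (snd ij))"
        proof (cases "i < j")
          case True
          hence "(i,j) \<in> P" using ij unfolding P_def by auto
          moreover have "p \<in> Qset V R E (Suc k) i j" using pw ij unfolding Qset_def by simp
          ultimately show ?thesis by force
        next
          case False
          hence "(j,i) \<in> P" using ij \<open>i \<noteq> j\<close> unfolding P_def by auto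
          moreover have "p \<in> Qset V R E (Suc k) j i" using pw ij symE unfolding Qset_def by simp
          ultimately show ?thesis by force
        qed
      qed
      have fQ: "finite (Qset V R E m i j)" for m i j using walks_finite[OF fV] unfolding Qset_def by simp
      have "card NI \<le> card (\<Union>ij\<in>P. Qset V R E (Suc k) (fst ij) (snd ij))"
        using NIsub fP fQ by (intro card_mono) auto
      also have "\<dots> \<le> (\<Sum>ij\<in>P. card (Qset V R E (Suc k) (fst ij) (snd ij)))" by (rule card_UN_le[OF fP])
      finally have "real (card NI) \<le> (\<Sum>ij\<in>P. real (card (Qset V R E (Suc k) (fst ij) (snd ij))))"
        by (simp flip: of_nat_sum)
      also have "\<dots> \<le> real (card P) * (\<eta> * real (card V) * real \<Delta> ^ k)"
        using sum_bounded_above[of P "\<lambda>ij. real (card (Qset V R E (Suc k) (fst ij) (snd ij)))"] Qb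
        unfolding P_def by force
      also have "\<dots> \<le> real ((k+1)^2) * (\<eta> * real (card V) * real \<Delta> ^ k)"
      proof (rule mult_right_mono)
        show "real (card P) \<le> real ((k+1)^2)" using cP by (simp only: of_nat_le_iff)
        show "0 \<le> \<eta> * real (card V) * real \<Delta> ^ k" using eta by simp
      qed
      also have "\<dots> = \<epsilon> * (real (card V) * (real \<Delta> / (2 * K)) ^ k)"
        unfolding \<eta>_def using Kp by (simp add: power_divide field_simps)
      also have "\<dots> \<le> \<epsilon> * (real (card V) * (real \<delta> - k) ^ k)"
      proof -
        have "0 \<le> real \<Delta> / (2 * K)" using Kp by simp
        hence "(real \<Delta> / (2 * K)) ^ k \<le> (real \<delta> - k) ^ k" using dk by (intro power_mono) auto
        thus ?thesis using ep by (intro mult_left_mono) auto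
      qed
      also have "\<dots> \<le> \<epsilon> * real (card AP)"
        using dpaths_lb[OF fV _ dk0, of R k] dge ep unfolding AP_def alt_eq d_def
        by (intro mult_left_mono) auto
      finally have NIb: "real (card NI) \<le> \<epsilon> * real (card AP)" .
      have fAP: "finite AP" unfolding AP_def alt_eq using walks_finite[OF fV] by simp
      have "card AP = card {p \<in> AP. induced_path E p} + card NI"
        unfolding NI_def using fAP by (subst card_Un_disjoint[symmetric]) (auto intro: arg_cong[where f = card])
      hence "real (card {p \<in> AP. induced_path E p}) = real (card AP) - real (card NI)" by simp
      thus ?thesis using NIb unfolding AP_def by (simp add: algebra_simps)
    qed
  qed
qed

end
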